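(* Let $\ell\ge2$ and $m\ge1$ be integers, and define $T\colon\mathbb{C}^2\to\mathbb{C}^2$ by $T(z,w)=\bigl(w,\ z^\ell+\bar z\,w^m\bigr)$, regarded as a smooth map $\mathbb{R}^4\to\mathbb{R}^4$ with the complex orientations on source and target. Then the origin is the only point where $dT$ has rank $2$, and its index satisfies $\mathrm{ind}_0(T)=m(\ell-1)$.
   Context: Index of an isolated rank-$2$ point. Let $g\colon M\to N$ be a smooth map between oriented $4$-manifolds, and let $p$ be an isolated point with $\mathrm{rk}(dg_p)=2$. Choose oriented local coordinates $x=(x_1,\dots,x_4)$ centered at $p$ and $y$ centered at $g(p)$ in which \[ g(x)=\bigl(x_1,\ x_2,\ A(x),\ B(x)\bigr), \] where $A(0)=B(0)=0$ and the matrix $\begin{pmatrix}\partial A/\partial x_3&\partial A/\partial x_4\\ \partial B/\partial x_3&\partial B/\partial x_4\end{pmatrix}$ vanishes at $x=0$ and only there. The index $\mathrm{ind}_p(g)$ is the local degree at $0$ of the map \[ \hat g=\Bigl(\frac{\partial A}{\partial x_3},\ \frac{\partial B}{\partial x_3},\ \frac{\partial A}{\partial x_4},\ \frac{\partial B}{\partial x_4}\Bigr)\colon(\mathbb{R}^4,0)\to(\mathbb{R}^4,0), \] that is, the signed count of preimages near $0$ of a sufficiently small regular value. For $T$, writing $K(w,z)=z^\ell+\bar z w^m$ and using the complex coordinates $(w,z)$, this local degree equals the local degree at $0$ of \[ \kappa(w,z)=\Bigl(\frac{\partial K}{\partial z}+\frac{\partial K}{\partial\bar z},\ i\Bigl(\frac{\partial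 K}{\partial z}-\frac{\partial K}{\partial\bar z}\Bigr)\Bigr). \] *)

theory Defs
  imports "HOL-Analysis.Analysis"
begin

text \<open>Real coordinates on C^2 = R^4 with the complex orientation:
  a point (z,w) of C^2 corresponds to (Re z, Im z, Re w, Im w).\<close>

definition cpx4 :: "complex \<Rightarrow> complex \<Rightarrow> real^4" where
  "cpx4 a b = vector [Re a, Im a, Re b, Im b]"

definition Tmap :: "nat \<Rightarrow> nat \<Rightarrow> real^4 \<Rightarrow> real^4" where
  "Tmap l m x = (let z = Complex (x$1) (x$2); w = Complex (x$3) (x$4)
                 in cpx4 w (z ^ l + cnj z * w ^ m))"

text \<open>Oriented chart (w,z): u = (Re w, Im w, Re z, Im z) \<mapsto> (z,w).
  It is an even permutation of coordinates, hence orientation preserving.\<close>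
definition swap_chart :: "real^4 \<Rightarrow> real^4" where
  "swap_chart u = vector [u$3, u$4, u$1, u$2]"

definition partial_deriv :: "(real^4 \<Rightarrow> real^4) \<Rightarrow> 4 \<Rightarrow> real^4 \<Rightarrow> real^4" where
  "partial_deriv f i u = frechet_derivative f (at u) (axis i 1)"

text \<open>For g(x) = (x1, x2, A(x), B(x)), the map
  g-hat = (dA/dx3, dB/dx3, dA/dx4, dB/dx4).\<close>
definition rank2_hat :: "(real^4 \<Rightarrow> real^4) \<Rightarrow> real^4 \<Rightarrow> real^4" where
  "rank2_hat g u = vector [partial_deriv g 3 u $ 3, partial_deriv g 3 u $ 4,
                           partial_deriv g 4 u $ 3, partial_deriv g 4 u $ 4]"

definition regular_value_on :: "(real^'n \<Rightarrow> real^'n) \<Rightarrow> (real^'n) set \<Rightarrow> real^'n \<Rightarrow> bool" where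
  "regular_value_on f U y \<longleftrightarrow>
     (\<forall>x\<in>U. f x = y \<longrightarrow> f differentiable (at x) \<and> det (jacobian f (at x)) \<noteq> 0)"

definition has_local_degree_at0 :: "(real^'n \<Rightarrow> real^'n) \<Rightarrow> int \<Rightarrow> bool" where
  "has_local_degree_at0 f d \<longleftrightarrow> f 0 = 0 \<and>
     (\<exists>\<epsilon>>0. (\<forall>x\<in>cball 0 \<epsilon>. f x = 0 \<longrightarrow> x = 0) \<and>
        (\<exists>\<delta>>0. (\<forall>\<eta>>0. \<exists>y. norm y < min \<delta> \<eta> \<and> regular_value_on f (ball 0 \<epsilon>) y) \<and>
           (\<forall>y. norm y < \<delta> \<and> regular_value_on f (ball 0 \<epsilon>) y \<longrightarrow>
              finite {x\<in>ball 0 \<epsilon>. f x = y} \<and>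
              (\<Sum>x\<in>{x\<in>ball 0 \<epsilon>. f x = y}. sgn (det (jacobian f (at x)))) = of_int d)))"

end

theory Submission
  imports Defs
begin


lemma cpx4_nth[simp]: "cpx4 a b $ 1 = Re a" "cpx4 a b $ 2 = Im a" "cpx4 a b $ 3 = Re b" "cpx4 a b $ 4 = Im b"
  unfolding cpx4_def vector_def by simp_all

lemma cpx4_eq_sum: "cpx4 a b = Re a *\<^sub>R axis 1 1 + Im a *\<^sub>R axis 2 1 + Re b *\<^sub>R axis 3 1 + Im b *\<^sub>R axis 4 1"
  by (simp add: vec_eq_iff forall_4 axis_def)

lemma cpx4_deriv:
  assumes "(f has_derivative f') F" "(g has_derivative g') F"
  shows "((\<lambda>x. cpx4 (f x) (g x)) has_derivative (\<lambda>h. cpx4 (f' h) (g' h))) F"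
  unfolding cpx4_eq_sum by (intro derivative_eq_intros) (auto simp: assms)

definition Zc :: "real^4 \<Rightarrow> complex" where "Zc x = Complex (x$1) (x$2)"
definition Wc :: "real^4 \<Rightarrow> complex" where "Wc x = Complex (x$3) (x$4)"

lemma bl_Zc: "bounded_linear Zc"
proof -
  have e: "Zc = (\<lambda>x. of_real (x$1) + \<i> * of_real (x$2))" by (auto simp: Zc_def complex_eq_iff)
  have "bounded_linear (\<lambda>x::real^4. of_real (x$1) + \<i> * of_real (x$2))"
    by (intro bounded_linear_add bounded_linear_compose[OF bounded_linear_mult_right] bounded_linear_compose[OF bounded_linear_of_real] bounded_linear_vec_nth)
  then show ?thesis by (simp add: e)
qed
lemma bl_Wc: "bounded_linear Wc"
proof -
  have e: "Wc = (\<lambda>x. of_real (x$3) + \<i> * of_real (x$4))" by (auto simp: Wc_def complex_eq_iff)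
  have "bounded_linear (\<lambda>x::real^4. of_real (x$3) + \<i> * of_real (x$4))"
    by (intro bounded_linear_add bounded_linear_compose[OF bounded_linear_mult_right] bounded_linear_compose[OF bounded_linear_of_real] bounded_linear_vec_nth)
  then show ?thesis by (simp add: e)
qed

lemma Zc_deriv[derivative_intros]: "(Zc has_derivative Zc) F"
  by (rule bounded_linear_imp_has_derivative[OF bl_Zc])
lemma Wc_deriv[derivative_intros]: "(Wc has_derivative Wc) F"
  by (rule bounded_linear_imp_has_derivative[OF bl_Wc])

lemma Zc_axis[simp]: "Zc (axis 1 1) = 1" "Zc (axis 2 1) = \<i>" "Zc (axis 3 1) = 0" "Zc (axis 4 1) = 0"
  by (auto simp: Zc_def axis_def complex_eq_iff)
lemma Wc_axis[simp]: "Wc (axis 1 1) = 0" "Wc (axis 2 1) = 0" "Wc (axis 3 1) = 1" "Wc (axis 4 1) = \<i>"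
  by (auto simp: Wc_def axis_def complex_eq_iff)

lemma Tmap_eq: "Tmap l m = (\<lambda>x. cpx4 (Wc x) (Zc x ^ l + cnj (Zc x) * Wc x ^ m))"
  by (simp add: Tmap_def Zc_def Wc_def Let_def fun_eq_iff)

lemma swap_Zc[simp]: "Zc (swap_chart u) = Wc u" and swap_Wc[simp]: "Wc (swap_chart u) = Zc u"
  by (auto simp: Zc_def Wc_def swap_chart_def vector_def)

lemma g_eq: "Tmap l m \<circ> swap_chart = (\<lambda>u. cpx4 (Zc u) (Wc u ^ l + cnj (Wc u) * Zc u ^ m))"
  by (auto simp: Tmap_eq)

lemma Tmap_deriv: "(Tmap l m has_derivative (\<lambda>h. cpx4 (Wc h)
   (of_nat l * Zc h * Zc x ^ (l - 1) + (cnj (Zc h) * Wc x ^ m + cnj (Zc x) * (of_nat m * Wc h * Wc x ^ (m - 1)))))) (at x)"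
  unfolding Tmap_eq by (intro cpx4_deriv derivative_eq_intros) auto

lemma g_deriv: "((Tmap l m \<circ> swap_chart) has_derivative (\<lambda>h. cpx4 (Zc h)
   (of_nat l * Wc h * Wc u ^ (l - 1) + (cnj (Wc h) * Zc u ^ m + cnj (Wc u) * (of_nat m * Zc h * Zc u ^ (m - 1)))))) (at u)"
  unfolding g_eq by (intro cpx4_deriv derivative_eq_intros) auto

definition Gf :: "nat \<Rightarrow> nat \<Rightarrow> real^4 \<Rightarrow> real^4" where
  "Gf l m u = cpx4 (of_nat l * Wc u ^ (l - 1) + Zc u ^ m) (\<i> * (of_nat l * Wc u ^ (l - 1)) - \<i> * Zc u ^ m)"

lemma hat_eq: "rank2_hat (Tmap l m \<circ> swap_chart) = Gf l m"
proof
  fix u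
  have fd: "frechet_derivative (Tmap l m \<circ> swap_chart) (at u) = (\<lambda>h. cpx4 (Zc h)
   (of_nat l * Wc h * Wc u ^ (l - 1) + (cnj (Wc h) * Zc u ^ m + cnj (Wc u) * (of_nat m * Zc h * Zc u ^ (m - 1)))))"
    using frechet_derivative_at[OF g_deriv] by simp
  show "rank2_hat (Tmap l m \<circ> swap_chart) u = Gf l m u"
    unfolding rank2_hat_def partial_deriv_def fd Gf_def
    by (simp add: vec_eq_iff forall_4 vector_def)
qed



lemma det_4: "det (A::'a::comm_ring_1^4^4) = A$1$1 * A$2$2 * A$3$3 * A$4$4 -A$1$1 * A$2$2 * A$3$4 * A$4$3 -A$1$1 * A$2$3 * A$3$2 * A$4$4 +A$1$1 * A$2$3 * A$3$4 * A$4$2 +A$1$1 * A$2$4 * A$3$2 * A$4$3 -A$1$1 * A$2$4 * A$3$3 * A$4$2 -A$1$2 * A$2$1 * A$3$3 * A$4$4 +A$1$2 * A$2$1 * A$3$4 * A$4$3 +A$1$2 * A$2$3 * A$3$1 * A$4$4 -A$1$2 * A$2$3 * A$3$4 * A$4$1 -A$1$2 * A$2$4 * A$3$1 * A$4$3 +A$1$2 * A$2$4 * A$3$3 * A$4$1 +A$1$3 * A$2$1 * A$3$2 * A$4$4 -A$1$3 * A$2$1 * A$3$4 * A$4$2 -A$1$3 * A$2$2 * A$3$1 * A$4$4 +A$1$3 * A$2$2 * A$3$4 * A$4$1 +A$1$3 * A$2$4 * A$3$1 * A$4$2 -A$1$3 * A$2$4 * A$3$2 * A$4$1 -A$1$4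 * A$2$1 * A$3$2 * A$4$3 +A$1$4 * A$2$1 * A$3$3 * A$4$2 +A$1$4 * A$2$2 * A$3$1 * A$4$3 -A$1$4 * A$2$2 * A$3$3 * A$4$1 -A$1$4 * A$2$3 * A$3$1 * A$4$2 +A$1$4 * A$2$3 * A$3$2 * A$4$1"
proof -
  have f1: "finite {2::4, 3, 4}" "1 \<notin> {2::4, 3, 4}" by auto
  have f2: "finite {3::4, 4}" "2 \<notin> {3::4, 4}" by auto
  have f3: "finite {4::4}" "3 \<notin> {4::4}" by auto
  show ?thesis
    unfolding det_def UNIV_4
    unfolding sum_over_permutations_insert[OF f1]
    unfolding sum_over_permutations_insert[OF f2]
    unfolding sum_over_permutations_insert[OF f3]
    unfolding permutes_sing
    by (simp add: sign_swap_id permutation_swap_id sign_compose permutation_compose swap_id_eq algebra_simps)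
qed

definition Aa :: "nat \<Rightarrow> real^4 \<Rightarrow> complex" where "Aa l u = of_nat l * of_nat (l - 1) * Wc u ^ (l - 1 - 1)"
definition Bb :: "nat \<Rightarrow> real^4 \<Rightarrow> complex" where "Bb m u = of_nat m * Zc u ^ (m - 1)"

lemma Gf_deriv: "(Gf l m has_derivative (\<lambda>h. cpx4 (Aa l u * Wc h + Bb m u * Zc h) (\<i> * (Aa l u * Wc h) - \<i> * (Bb m u * Zc h)))) (at u)"
proof -
  have "(Gf l m has_derivative (\<lambda>h. cpx4 (of_nat l * (of_nat (l-1) * Wc h * Wc u^(l-1-1)) + of_nat m * Zc h * Zc u^(m-1)) (\<i> * (of_nat l * (of_nat (l-1) * Wc h * Wc u^(l-1-1))) - \<i> * (of_nat m * Zc h * Zc u^(m-1))))) (at u)"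
    unfolding Gf_def[abs_def] by (intro cpx4_deriv derivative_intros)
  then show ?thesis by (rule has_derivative_eq_rhs) (auto simp: Aa_def Bb_def fun_eq_iff algebra_simps)
qed

lemma det_Gf: "det (jacobian (Gf l m) (at u)) = 4 * (cmod (Aa l u))^2 * (cmod (Bb m u))^2"
proof -
  have j: "jacobian (Gf l m) (at u) = matrix (\<lambda>h. cpx4 (Aa l u * Wc h + Bb m u * Zc h) (\<i> * (Aa l u * Wc h) - \<i> * (Bb m u * Zc h)))"
    unfolding jacobian_def using frechet_derivative_at[OF Gf_deriv] by simp
  show ?thesis unfolding j det_4 cmod_power2
    by (simp add: matrix_def algebra_simps power2_eq_square)
qed


lemma indep3:
  fixes a b c :: "real^4"
  assumes "a$1 = 1" "a$2 = 0" "b$1 = 0" "b$2 = 1" "c$1 = 0" "c$2 = 0" "c \<noteq> 0"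
  shows "independent {a, b, c}" "card {a,b,c} = 3"
proof -
  have ic: "independent {c}" using assms by simp
  have "b \<notin> span {c}"
  proof
    assume "b \<in> span {c}"
    then obtain k where "b = k *\<^sub>R c" by (auto simp: span_singleton)
    then have "b$2 = k * c$2" by simp
    then show False using assms by simp
  qed
  then have ibc: "independent {b, c}" using ic by (rule independent_insertI)
  have "a \<notin> span {b, c}"
  proof
    assume "a \<in> span {b, c}"
    then obtain k j where "a - k *\<^sub>R b = j *\<^sub>R c" by (auto simp: span_insert span_singleton)
    then have "(a - k *\<^sub>R b)$1 = (j *\<^sub>R c)$1" by simp
    then show False using assms by simp
  qed
  then show "independent {a, b, c}" using ibc by (rule independent_insertI)
  have "a \<noteq> b" "a \<noteq> c" "b \<noteq> c" using assms by auto
  then show "card {a,b,c} = 3" by simp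
qed

lemma rank_lin: "linear f \<Longrightarrow> rank (matrix f :: real^4^4) = dim (range f)"
  by (simp add: rank_dim_range matrix_works)

lemma jac_T: "jacobian (Tmap l m) (at x) = matrix (\<lambda>h. cpx4 (Wc h)
   (of_nat l * Zc h * Zc x ^ (l - 1) + (cnj (Zc h) * Wc x ^ m + cnj (Zc x) * (of_nat m * Wc h * Wc x ^ (m - 1)))))"
  unfolding jacobian_def using frechet_derivative_at[OF Tmap_deriv] by simp

lemma lin_T: "linear (\<lambda>h. cpx4 (Wc h)
   (of_nat l * Zc h * Zc x ^ (l - 1) + (cnj (Zc h) * Wc x ^ m + cnj (Zc x) * (of_nat m * Wc h * Wc x ^ (m - 1)))))"
  using Tmap_deriv has_derivative_linear by blast

lemma ZW_zero: "Zc p = 0 \<Longrightarrow> Wc p = 0 \<Longrightarrow> p = 0"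
  by (auto simp: Zc_def Wc_def vec_eq_iff forall_4 complex_eq_iff)

lemma rank_part:
  assumes "l \<ge> 2" "m \<ge> 1"
  shows "rank (jacobian (Tmap l m) (at p)) = 2 \<longleftrightarrow> p = 0"
proof -
  define D where "D = (\<lambda>h. cpx4 (Wc h)
   (of_nat l * Zc h * Zc p ^ (l - 1) + (cnj (Zc h) * Wc p ^ m + cnj (Zc p) * (of_nat m * Wc h * Wc p ^ (m - 1)))))"
  have r: "rank (jacobian (Tmap l m) (at p)) = dim (range D)"
    unfolding jac_T D_def by (rule rank_lin[OF lin_T])
  have e1: "D (axis 3 1) $ 1 = 1" "D (axis 3 1) $ 2 = 0" "D (axis 4 1) $ 1 = 0" "D (axis 4 1) $ 2 = 1"
    "D (axis 1 1) $ 1 = 0" "D (axis 1 1) $ 2 = 0" "D (axis 2 1) $ 1 = 0" "D (axis 2 1) $ 2 = 0"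
    by (simp_all add: D_def)
  show ?thesis
  proof
    assume rk: "rank (jacobian (Tmap l m) (at p)) = 2"
    show "p = 0"
    proof (rule ccontr)
      assume "p \<noteq> 0"
      have "D (axis 1 1) \<noteq> 0 \<or> D (axis 2 1) \<noteq> 0"
      proof (rule ccontr)
        assume "\<not> ?thesis"
        then have h1: "D (axis 1 1) = 0" and h2: "D (axis 2 1) = 0" by auto
        have "of_nat l * Zc p ^ (l - 1) + Wc p ^ m = 0"
          using arg_cong[OF h1, of "\<lambda>v. Complex (v$3) (v$4)"] by (simp add: D_def complex_eq_iff)
        moreover have "of_nat l * \<i> * Zc p ^ (l - 1) - \<i> * Wc p ^ m = 0"
          using arg_cong[OF h2, of "\<lambda>v. Complex (v$3) (v$4)"] by (simp add: D_def algebra_simps complex_eq_iff)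
        ultimately have "of_nat l * Zc p ^ (l - 1) = 0" "Wc p ^ m = 0"
          by (auto simp: algebra_simps)
        then have "Zc p = 0" "Wc p = 0" using assms by auto
        then show False using \<open>p \<noteq> 0\<close> ZW_zero by blast
      qed
      then obtain c where c: "c \<in> range D" "c \<noteq> 0" "c$1 = 0" "c$2 = 0" using e1 by blast
      have "card {D (axis 3 1), D (axis 4 1), c} \<le> dim (range D)"
        by (rule independent_card_le_dim) (use c indep3[of "D (axis 3 1)" "D (axis 4 1)" c] e1 in auto)
      then show False using indep3[of "D (axis 3 1)" "D (axis 4 1)" c] e1 c rk r by simp
    qed
  next
    assume "p = 0"
    then have Dp: "D = (\<lambda>h. cpx4 (Wc h) 0)"
    proof -
      have z0: "Zc p = 0" "Wc p = 0" using \<open>p = 0\<close> by (auto simp: Zc_def Wc_def complex_eq_iff)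
      show ?thesis using assms by (auto simp: D_def fun_eq_iff z0 zero_power)
    qed
    have le: "dim (range D) \<le> card {axis 1 1 :: real^4, axis 2 1}"
    proof (rule dim_le_card)
      show "range D \<subseteq> span {axis 1 1, axis 2 1}"
      proof
        fix v assume "v \<in> range D"
        then obtain h where "v = D h" by auto
        then have "v = (h$3) *\<^sub>R axis 1 1 + (h$4) *\<^sub>R axis 2 1"
          by (simp add: Dp vec_eq_iff forall_4 axis_def Wc_def)
        then show "v \<in> span {axis 1 1, axis 2 1}"
          by (simp add: span_add span_scale span_base)
      qed
    qed simp
    have ind: "independent {axis 1 1 :: real^4, axis 2 1}"
      by (rule independent_mono[OF independent_Basis]) (auto simp: Basis_vec_def)
    have "card {axis 1 1 :: real^4, axis 2 1} \<le> dim (range D)"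
    proof (rule independent_card_le_dim[OF _ ind])
      have "D (axis 3 1) = axis 1 1" "D (axis 4 1) = axis 2 1"
        unfolding Dp Wc_axis by (simp_all add: vec_eq_iff forall_4 axis_def)
      then show "{axis 1 1, axis 2 1} \<subseteq> range D" by (metis empty_subsetI insert_subset rangeI)
    qed
    moreover have "card {axis 1 1 :: real^4, axis 2 1} = 2"
      by (simp add: axis_eq_axis)
    ultimately show "rank (jacobian (Tmap l m) (at p)) = 2" using le r by simp
  qed
qed


lemma lin2: "(a + b = c \<and> \<i>*a - \<i>*b = d) \<longleftrightarrow> (a = (c - \<i>*d)/2 \<and> b = (c + \<i>*d)/(2::complex))"
  by (auto simp: complex_eq_iff)

lemma cpx4_inj: "cpx4 a b = cpx4 c d \<longleftrightarrow> a = c \<and> b = d"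
  by (auto simp: vec_eq_iff forall_4 complex_eq_iff)

lemma cpx4_ZW: "cpx4 (Zc u) (Wc u) = u"
  by (simp add: vec_eq_iff forall_4 Zc_def Wc_def)

lemma ZW_cpx4[simp]: "Zc (cpx4 z w) = z" "Wc (cpx4 z w) = w"
  by (simp_all add: Zc_def Wc_def complex_eq_iff)

lemma norm4: "norm (x::real^4) = sqrt ((x$1)^2 + (x$2)^2 + (x$3)^2 + (x$4)^2)"
  by (simp add: norm_vec_def L2_set_def sum_4)

lemma norm_cpx4: "norm (cpx4 z w) = sqrt ((cmod z)^2 + (cmod w)^2)"
  by (simp add: norm4 cmod_power2 add.assoc)

definition al :: "real^4 \<Rightarrow> complex" where "al y = (Zc y - \<i> * Wc y) / 2"
definition be :: "real^4 \<Rightarrow> complex" where "be y = (Zc y + \<i> * Wc y) / 2"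

lemma pre_iff: "Gf l m u = y \<longleftrightarrow> (of_nat l * Wc u ^ (l - 1) = al y \<and> Zc u ^ m = be y)"
proof -
  have "Gf l m u = y \<longleftrightarrow> Gf l m u = cpx4 (Zc y) (Wc y)" by (simp add: cpx4_ZW)
  also have "\<dots> \<longleftrightarrow> (of_nat l * Wc u ^ (l - 1) + Zc u ^ m = Zc y \<and> \<i> * (of_nat l * Wc u ^ (l - 1)) - \<i> * Zc u ^ m = Wc y)"
    by (simp add: Gf_def cpx4_inj)
  also have "\<dots> \<longleftrightarrow> (of_nat l * Wc u ^ (l - 1) = al y \<and> Zc u ^ m = be y)" unfolding lin2 al_def be_def ..
  finally show ?thesis .
qed

lemma cmod_Zc_le: "cmod (Zc y) \<le> norm y" and cmod_Wc_le: "cmod (Wc y) \<le> norm y"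
proof -
  have n: "norm y = norm (cpx4 (Zc y) (Wc y))" by (simp add: cpx4_ZW)
  show "cmod (Zc y) \<le> norm y" unfolding n norm_cpx4 by (rule real_le_rsqrt) simp
  show "cmod (Wc y) \<le> norm y" unfolding n norm_cpx4 by (rule real_le_rsqrt) simp
qed

lemma al_le: "cmod (al y) \<le> norm y" and be_le: "cmod (be y) \<le> norm y"
proof -
  have "cmod (Zc y - \<i> * Wc y) \<le> cmod (Zc y) + cmod (\<i> * Wc y)" by (rule norm_triangle_ineq4)
  then show "cmod (al y) \<le> norm y" using cmod_Zc_le[of y] cmod_Wc_le[of y] by (simp add: al_def norm_mult norm_divide)
  have "cmod (Zc y + \<i> * Wc y) \<le> cmod (Zc y) + cmod (\<i> * Wc y)" by (rule norm_triangle_ineq)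
  then show "cmod (be y) \<le> norm y" using cmod_Zc_le[of y] cmod_Wc_le[of y] by (simp add: be_def norm_mult norm_divide)
qed

lemma small_root: assumes "z ^ n = c" "cmod c < 1" "n \<ge> 1" shows "cmod (z::complex) < 1"
proof (rule ccontr)
  assume "\<not> ?thesis"
  then have "1 \<le> cmod z ^ n" by (simp add: one_le_power)
  moreover from assms(1) have "cmod c = cmod z ^ n" by (metis norm_power)
  ultimately show False using assms(2) by linarith
qed

lemma pre_small:
  assumes "l \<ge> 2" "m \<ge> 1" "norm y < 1" "Gf l m u = y"
  shows "norm u < 2"
proof -
  have e: "of_nat l * Wc u ^ (l - 1) = al y" "Zc u ^ m = be y" using assms pre_iff by blast+
  have "cmod (Zc u) < 1" using small_root[OF e(2)] be_le[of y] assms by linarith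
  moreover have "Wc u ^ (l - 1) = al y / of_nat l" using e(1) assms by (auto simp: field_simps)
  then have "cmod (Wc u) < 1"
  proof (rule small_root)
    have "cmod (al y) / real l \<le> cmod (al y) / 1" using assms by (intro divide_left_mono) auto
    then have "cmod (al y / of_nat l) \<le> cmod (al y)" by (simp add: norm_divide)
    then show "cmod (al y / of_nat l) < 1" using al_le[of y] assms by linarith
  qed (use assms in auto)
  ultimately have "(cmod (Zc u))^2 + (cmod (Wc u))^2 < 2"
    by (smt (verit) norm_ge_zero power_strict_mono power2_eq_square mult_less_cancel_right1)
  then have "norm u < sqrt 2" using norm_cpx4[of "Zc u" "Wc u"] by (simp add: cpx4_ZW)
  also have "sqrt 2 < (2::real)" using real_sqrt_less_mono[of 2 4] by (simp add: real_sqrt_four)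
  finally show ?thesis .
qed



lemma det_Gf_nonneg: "det (jacobian (Gf l m) (at u)) \<ge> 0"
  unfolding det_Gf by simp

lemma det_Gf_nz: "det (jacobian (Gf l m) (at u)) \<noteq> 0 \<longleftrightarrow> Aa l u \<noteq> 0 \<and> Bb m u \<noteq> 0"
  unfolding det_Gf by simp

lemma sgn_det: "det (jacobian (Gf l m) (at u)) \<noteq> 0 \<Longrightarrow> sgn (det (jacobian (Gf l m) (at u))) = 1"
  using det_Gf_nonneg[of l m u] by (simp add: sgn_if)

lemma Gf_differentiable: "Gf l m differentiable (at u)"
  using Gf_deriv by (rule differentiableI)

lemma roots_ex: "n \<ge> 1 \<Longrightarrow> \<exists>z::complex. z ^ n = c"
proof (cases "c = 0")
  case True assume "n \<ge> 1" then show ?thesis using True by (intro exI[of _ 0]) simp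
next
  case False assume n: "n \<ge> 1"
  then have "card {z::complex. z ^ n = c} = n" using False by (intro card_nth_roots) auto
  then have "{z::complex. z ^ n = c} \<noteq> {}" using n by (metis card.empty not_one_le_zero)
  then show ?thesis by auto
qed

lemma roots_finite: "n \<ge> 1 \<Longrightarrow> finite {z::complex. z ^ n = c}"
proof (cases "c = 0")
  case True assume "n \<ge> 1" then have "{z::complex. z ^ n = c} = {0}" using True by auto
  then show ?thesis by simp
next
  case False assume n: "n \<ge> 1"
  then have "card {z::complex. z ^ n = c} = n" using False by (intro card_nth_roots) auto
  then show ?thesis using n by (metis card.infinite not_one_le_zero)
qed

definition Zs where "Zs m y = {z::complex. z ^ m = be y}"
definition Ws where "Ws l y = {w::complex. w ^ (l - 1) = al y / of_nat l}"

lemma pre_iff2: assumes "l \<ge> 2" shows "Gf l m u = y \<longleftrightarrow> Zc u \<in> Zs m y \<and> Wc u \<in> Ws l y"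
  unfolding pre_iff Zs_def Ws_def using assms by (auto simp: field_simps)

lemma pre_set: assumes "l \<ge> 2" shows "{u. Gf l m u = y} = (\<lambda>(z,w). cpx4 z w) ` (Zs m y \<times> Ws l y)"
proof -
  have "u \<in> (\<lambda>(z,w). cpx4 z w) ` (Zs m y \<times> Ws l y)" if "Zc u \<in> Zs m y" "Wc u \<in> Ws l y" for u
    using that cpx4_ZW[of u] by (metis (no_types, lifting) SigmaI case_prod_conv image_eqI)
  then show ?thesis using pre_iff2[OF assms] by auto
qed

lemma pre_card: assumes "l \<ge> 2" "m \<ge> 1"
  shows "finite {u. Gf l m u = y}" "card {u. Gf l m u = y} = card (Zs m y) * card (Ws l y)"
proof -
  have inj: "inj_on (\<lambda>(z,w). cpx4 z w) (Zs m y \<times> Ws l y)" by (auto simp: inj_on_def cpx4_inj)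
  have f: "finite (Zs m y)" "finite (Ws l y)" using assms roots_finite unfolding Zs_def Ws_def by auto
  show "finite {u. Gf l m u = y}" unfolding pre_set[OF assms(1)] using f by simp
  show "card {u. Gf l m u = y} = card (Zs m y) * card (Ws l y)"
    unfolding pre_set[OF assms(1)] card_image[OF inj] card_cartesian_product ..
qed

lemma card_Zs:
  assumes "l \<ge> 2" "m \<ge> 1" "norm y < 1" "regular_value_on (Gf l m) (ball 0 2) y"
  shows "card (Zs m y) = m"
proof (cases "be y = 0")
  case False then show ?thesis unfolding Zs_def using assms by (intro card_nth_roots) auto
next
  case True
  then have Z0: "Zs m y = {0}" using assms by (auto simp: Zs_def)
  show ?thesis
  proof (cases "m = 1")
    case True then show ?thesis using Z0 by simp
  next
    case False
    have l1: "l - 1 \<ge> 1" using assms(1) by arith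
    obtain w where w: "w \<in> Ws l y" unfolding Ws_def using roots_ex[OF l1, of "al y / of_nat l"] by auto
    define u0 where "u0 = cpx4 0 w"
    have g: "Gf l m u0 = y" using pre_iff2[OF assms(1)] Z0 w by (simp add: u0_def)
    then have "u0 \<in> ball 0 2" using pre_small[OF assms(1,2,3)] by simp
    then have "det (jacobian (Gf l m) (at u0)) \<noteq> 0" using assms(4) g unfolding regular_value_on_def by blast
    moreover have "Bb m u0 = 0" using False assms by (simp add: Bb_def u0_def)
    ultimately show ?thesis using det_Gf_nz by blast
  qed
qed

lemma card_Ws:
  assumes "l \<ge> 2" "m \<ge> 1" "norm y < 1" "regular_value_on (Gf l m) (ball 0 2) y"
  shows "card (Ws l y) = l - 1"
proof (cases "al y = 0")
  case False then show ?thesis unfolding Ws_def using assms by (intro card_nth_roots) auto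
next
  case True
  then have W0: "Ws l y = {0}" using assms by (auto simp: Ws_def)
  show ?thesis
  proof (cases "l = 2")
    case True then show ?thesis using W0 by simp
  next
    case False
    obtain z where z: "z \<in> Zs m y" unfolding Zs_def using roots_ex[of m] assms by auto
    define u0 where "u0 = cpx4 z 0"
    have g: "Gf l m u0 = y" using pre_iff2[OF assms(1)] W0 z by (simp add: u0_def)
    then have "u0 \<in> ball 0 2" using pre_small[OF assms(1,2,3)] by simp
    then have "det (jacobian (Gf l m) (at u0)) \<noteq> 0" using assms(4) g unfolding regular_value_on_def by blast
    moreover have "Aa l u0 = 0" using False assms by (simp add: Aa_def u0_def)
    ultimately show ?thesis using det_Gf_nz by blast
  qed
qed

lemma degree_Gf:
  assumes "l \<ge> 2" "m \<ge> 1"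
  shows "has_local_degree_at0 (Gf l m) (int m * (int l - 1))"
proof -
  have z: "Zc 0 = 0" "Wc 0 = 0" by (auto simp: Zc_def Wc_def complex_eq_iff)
  have h0: "Gf l m 0 = 0" using assms by (simp add: Gf_def z zero_power cpx4_def vec_eq_iff vector_def forall_4)
  have h1: "\<forall>x\<in>cball 0 2. Gf l m x = 0 \<longrightarrow> x = 0"
  proof (intro ballI impI)
    fix x :: "real^4" assume "Gf l m x = 0"
    then have "of_nat l * Wc x ^ (l - 1) = 0" "Zc x ^ m = 0"
      using pre_iff[of l m x 0] by (simp_all add: al_def be_def z)
    then have "Wc x = 0" "Zc x = 0" using assms by auto
    then show "x = 0" using ZW_zero by blast
  qed
  have h2: "\<forall>\<eta>>0. \<exists>y. norm y < min 1 \<eta> \<and> regular_value_on (Gf l m) (ball 0 2) y"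
  proof (intro allI impI)
    fix \<eta> :: real assume "\<eta> > 0"
    define t where "t = min 1 \<eta> / 2"
    have t: "t > 0" "t < min 1 \<eta>" using \<open>\<eta> > 0\<close> by (auto simp: t_def)
    define y where "y = cpx4 (of_real t) 0"
    have ny: "norm y = t" using t by (simp add: y_def norm_cpx4)
    have ab: "al y \<noteq> 0" "be y \<noteq> 0" using t by (auto simp: al_def be_def y_def)
    have "regular_value_on (Gf l m) (ball 0 2) y"
      unfolding regular_value_on_def
    proof (intro ballI impI)
      fix x :: "real^4" assume "x \<in> ball 0 2" "Gf l m x = y"
      then have e: "of_nat l * Wc x ^ (l - 1) = al y" "Zc x ^ m = be y" using pre_iff by blast+
      then have "Wc x \<noteq> 0" "Zc x \<noteq> 0" using ab assms by (auto simp: zero_power)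
      then have "Aa l x \<noteq> 0" "Bb m x \<noteq> 0" using assms by (auto simp: Aa_def Bb_def)
      then show "Gf l m differentiable (at x) \<and> det (jacobian (Gf l m) (at x)) \<noteq> 0" using det_Gf_nz Gf_differentiable by blast
    qed
    then show "\<exists>y. norm y < min 1 \<eta> \<and> regular_value_on (Gf l m) (ball 0 2) y" using ny t by blast
  qed
  have h3: "\<forall>y. norm y < 1 \<and> regular_value_on (Gf l m) (ball 0 2) y \<longrightarrow>
        finite {x \<in> ball 0 2. Gf l m x = y} \<and>
        (\<Sum>x\<in>{x \<in> ball 0 2. Gf l m x = y}. sgn (det (jacobian (Gf l m) (at x)))) = of_int (int m * (int l - 1))"
  proof (intro allI impI)
    fix y :: "real^4" assume H: "norm y < 1 \<and> regular_value_on (Gf l m) (ball 0 2) y"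
    have S: "{x \<in> ball 0 2. Gf l m x = y} = {u. Gf l m u = y}"
      using pre_small[OF assms] H by auto
    have sg: "sgn (det (jacobian (Gf l m) (at x))) = 1" if "x \<in> {u. Gf l m u = y}" for x
    proof (rule sgn_det)
      have "x \<in> ball 0 2" using that pre_small[OF assms] H by auto
      then show "det (jacobian (Gf l m) (at x)) \<noteq> 0" using H that unfolding regular_value_on_def by blast
    qed
    have c: "card {u. Gf l m u = y} = m * (l - 1)"
      using pre_card(2)[OF assms] card_Zs[OF assms] card_Ws[OF assms] H by simp
    have "(\<Sum>x\<in>{u. Gf l m u = y}. sgn (det (jacobian (Gf l m) (at x)))) = real (card {u. Gf l m u = y})"
      using sg by simp
    also have "\<dots> = of_int (int m * (int l - 1))" using c assms by (simp add: of_nat_diff)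
    finally show "finite {x \<in> ball 0 2. Gf l m x = y} \<and>
        (\<Sum>x\<in>{x \<in> ball 0 2. Gf l m x = y}. sgn (det (jacobian (Gf l m) (at x)))) = of_int (int m * (int l - 1))"
      unfolding S using pre_card(1)[OF assms] by simp
  qed
  have p: "(0::real) < 2" "(0::real) < 1" by simp_all
  show ?thesis unfolding has_local_degree_at0_def using h0 h1 h2 h3 p by blast
qed


theorem mainTheorem5:
  fixes l m :: nat
  assumes "l \<ge> 2" and "m \<ge> 1"
  shows "(\<forall>p. rank (jacobian (Tmap l m) (at p)) = 2 \<longleftrightarrow> p = 0)
         \<and> has_local_degree_at0 (rank2_hat (Tmap l m \<circ> swap_chart)) (int m * (int l - 1))"
  using rank_part[OF assms] degree_Gf[OF assms] by (simp add: hat_eq)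

end
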